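(* Let $\sigma>0$ and $1<\theta<\infty$. Then: (i) $w_{\sigma,\theta}$ is continuous with compact support $\mathrm{supp}(w_{\sigma,\theta})\subseteq\mathscr{S}_\theta:=[4,4\zeta(\theta)]$; (ii) $\mathscr{P}_\theta$ is countable and $w_{\sigma,\theta}$ is continuously differentiable on $\mathbb{R}\setminus\mathscr{P}_\theta$, so that $w'_{\sigma,\theta}$ exists a.e.; (iii) $w_{\gamma\sigma,\theta}=(w_{\sigma,\theta})^{\gamma-1}w_{\sigma,\theta}$ for all $\gamma>0$; (iv) $0\leq w_{\sigma,\theta}(\xi)\leq 2^{-\sigma\theta}$ for all $\xi\in\mathbb{R}$.
   Context: For $1<\theta<\infty$ let $a_{n,\theta}:=4\sum_{j=1}^{n-1}j^{-\theta}$ for integers $n\geq2$, so $a_{2,\theta}=4$, $a_{n+1,\theta}=a_{n,\theta}+4n^{-\theta}$ and $a_{\infty,\theta}:=\lim_n a_{n,\theta}=4\zeta(\theta)$ ($\zeta$ the Riemann zeta function). For $\sigma>0$ define $w_{\sigma,\theta}:\mathbb{R}\to[0,\infty)$ on each $[a_{n,\theta},a_{n+1,\theta})$, $n\geq2$, by: $w_{\sigma,\theta}(\xi)=(\xi-a_{n,\theta})^\sigma$ if $a_{n,\theta}\leq\xi<a_{n,\theta}+n^{-\theta}$; $=n^{-\theta\sigma}$ if $a_{n,\theta}+n^{-\theta}\leq\xi<a_{n,\theta}+2n^{-\theta}$; $=(a_{n,\theta}+3n^{-\theta}-\xi)^\sigma$ if $a_{n,\theta}+2n^{-\theta}\leq\xi<a_{n,\theta}+3n^{-\theta}$;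 $=0$ if $a_{n,\theta}+3n^{-\theta}\leq\xi<a_{n+1,\theta}$; and $w_{\sigma,\theta}:=0$ on $\mathbb{R}\setminus[a_{2,\theta},a_{\infty,\theta})$. The set of transition points is $\mathscr{P}_\theta:=\{\xi\in[a_{2,\theta},a_{\infty,\theta}) : \xi=a_{n,\theta}+kn^{-\theta}\text{ for some } n\geq2,\ k\in\{0,1,2,3\}\}\cup\{a_{\infty,\theta}\}$. *)

theory Defs
  imports "HOL-Analysis.Analysis"
begin

definition zeta_real :: "real \<Rightarrow> real" where
  "zeta_real \<theta> = (\<Sum>j. real (Suc j) powr (- \<theta>))"

definition a_seq :: "nat \<Rightarrow> real \<Rightarrow> real" where
  "a_seq n \<theta> = 4 * (\<Sum>j=1..<n. real j powr (- \<theta>))"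

definition a_inf :: "real \<Rightarrow> real" where
  "a_inf \<theta> = 4 * zeta_real \<theta>"

definition w_piece :: "real \<Rightarrow> real \<Rightarrow> nat \<Rightarrow> real \<Rightarrow> real" where
  "w_piece \<sigma> \<theta> n \<xi> =
     (let a = a_seq n \<theta>; h = real n powr (- \<theta>) in
      if \<xi> < a + h then (\<xi> - a) powr \<sigma>
      else if \<xi> < a + 2 * h then real n powr (- \<theta> * \<sigma>)
      else if \<xi> < a + 3 * h then (a + 3 * h - \<xi>) powr \<sigma>
      else 0)"

definition w_fun :: "real \<Rightarrow> real \<Rightarrow> real \<Rightarrow> real" where
  "w_fun \<sigma> \<theta> \<xi> =
     (if \<exists>n\<ge>2. a_seq n \<theta> \<le> \<xi> \<and> \<xi> < a_seq (Suc n) \<theta>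
      then w_piece \<sigma> \<theta> (THE n. n \<ge> 2 \<and> a_seq n \<theta> \<le> \<xi> \<and> \<xi> < a_seq (Suc n) \<theta>) \<xi>
      else 0)"

definition trans_pts :: "real \<Rightarrow> real set" where
  "trans_pts \<theta> =
     {\<xi>. a_seq 2 \<theta> \<le> \<xi> \<and> \<xi> < a_inf \<theta> \<and>
          (\<exists>n\<ge>2. \<exists>k\<in>{0,1,2,3::nat}. \<xi> = a_seq n \<theta> + real k * real n powr (- \<theta>))}
     \<union> {a_inf \<theta>}"

end

theory Submission
  imports Defs
begin

definition hh :: "nat \<Rightarrow> real \<Rightarrow> real" where "hh n \<theta> = real n powr (- \<theta>)"

lemma a_Suc: "a_seq (Suc n) \<theta> = a_seq n \<theta> + (if n = 0 then 0 else 4 * hh n \<theta>)"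
  by (simp add: a_seq_def hh_def algebra_simps)

lemma a_Suc1: "n \<ge> 1 \<Longrightarrow> a_seq (Suc n) \<theta> = a_seq n \<theta> + 4 * hh n \<theta>"
  by (simp add: a_Suc)

lemma hh_pos: "n \<ge> 1 \<Longrightarrow> hh n \<theta> > 0" by (simp add: hh_def)

lemma a_mono: "m \<le> n \<Longrightarrow> a_seq m \<theta> \<le> a_seq n \<theta>"
proof (induction n rule: dec_induct)
  case (step k) then show ?case using hh_pos[of k \<theta>] by (auto simp add: a_Suc)
qed simp

lemma a2: "a_seq 2 \<theta> = 4" by (simp add: a_seq_def numeral_2_eq_2)
lemma a1: "a_seq 1 \<theta> = 0" by (simp add: a_seq_def)
lemma a0: "a_seq 0 \<theta> = 0" by (simp add: a_seq_def)

lemma a_Suc_sum: "a_seq (Suc n) \<theta> = 4 * (\<Sum>j<n. real (Suc j) powr (- \<theta>))"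
proof -
  have "(\<Sum>j=1..<Suc n. real j powr (- \<theta>)) = (\<Sum>j=0..<n. real (Suc j) powr (- \<theta>))"
    using sum.shift_bounds_Suc_ivl[of "\<lambda>j. real j powr (- \<theta>)" 0 n] by simp
  then show ?thesis by (simp add: a_seq_def atLeast0LessThan)
qed

lemma zsum: assumes "1 < \<theta>" shows "summable (\<lambda>j. real (Suc j) powr (- \<theta>))"
proof -
  have "summable (\<lambda>j. real j powr (- \<theta>))" using assms summable_real_powr_iff by simp
  then show ?thesis using summable_Suc_iff[of "\<lambda>j. real j powr (- \<theta>)"] by simp
qed

lemma a_le_inf: assumes "1 < \<theta>" shows "a_seq n \<theta> \<le> a_inf \<theta>"
proof (cases n)
  case 0
  have "0 \<le> zeta_real \<theta>" unfolding zeta_real_def using zsum[OF assms]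
    by (intro suminf_nonneg) auto
  then show ?thesis using 0 by (simp add: a0 a_inf_def)
next
  case (Suc m)
  have "(\<Sum>j<m. real (Suc j) powr (- \<theta>)) \<le> zeta_real \<theta>" unfolding zeta_real_def
    using zsum[OF assms] by (intro sum_le_suminf) auto
  then show ?thesis using Suc by (simp add: a_Suc_sum a_inf_def)
qed

lemma a_lim: assumes "1 < \<theta>" "x < a_inf \<theta>" shows "\<exists>n. x < a_seq n \<theta>"
proof -
  have "(\<lambda>n. 4 * (\<Sum>j<n. real (Suc j) powr (- \<theta>))) \<longlonglongrightarrow> a_inf \<theta>"
    unfolding a_inf_def zeta_real_def using zsum[OF assms(1)]
    by (intro tendsto_mult_left summable_LIMSEQ)
  from order_tendstoD(1)[OF this assms(2)] obtain k where "x < 4 * (\<Sum>j<k. real (Suc j) powr (- \<theta>))"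
    by (meson eventually_sequentially order.refl)
  then show ?thesis by (metis a_Suc_sum)
qed

definition blk :: "real \<Rightarrow> nat \<Rightarrow> real \<Rightarrow> bool" where
  "blk \<theta> n x \<longleftrightarrow> n \<ge> 2 \<and> a_seq n \<theta> \<le> x \<and> x < a_seq (Suc n) \<theta>"

lemma blk_unique: assumes "blk \<theta> n x" "blk \<theta> m x" shows "n = m"
proof (rule ccontr)
  assume "n \<noteq> m"
  then consider "Suc n \<le> m" | "Suc m \<le> n" by linarith
  then show False
  proof cases
    case 1 then show ?thesis using a_mono[OF 1, of \<theta>] assms unfolding blk_def by linarith
  next
    case 2 then show ?thesis using a_mono[OF 2, of \<theta>] assms unfolding blk_def by linarith
  qed
qed

lemma blk_ex: "(\<exists>n\<ge>2. a_seq n \<theta> \<le> x \<and> x < a_seq (Suc n) \<theta>) \<longleftrightarrow> (\<exists>n. blk \<theta> n x)"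
  unfolding blk_def by blast

lemma blk_the: assumes "blk \<theta> n x" shows "(THE n. n \<ge> 2 \<and> a_seq n \<theta> \<le> x \<and> x < a_seq (Suc n) \<theta>) = n"
proof (rule the_equality)
  show "n \<ge> 2 \<and> a_seq n \<theta> \<le> x \<and> x < a_seq (Suc n) \<theta>" using assms unfolding blk_def .
next
  fix m assume "m \<ge> 2 \<and> a_seq m \<theta> \<le> x \<and> x < a_seq (Suc m) \<theta>"
  then have "blk \<theta> m x" unfolding blk_def .
  then show "m = n" using blk_unique[OF assms] by simp
qed

lemma w_blk: assumes "blk \<theta> n x" shows "w_fun \<sigma> \<theta> x = w_piece \<sigma> \<theta> n x"
proof -
  have "\<exists>n\<ge>2. a_seq n \<theta> \<le> x \<and> x < a_seq (Suc n) \<theta>" using assms blk_ex by blast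
  then show ?thesis unfolding w_fun_def blk_the[OF assms] by (simp only: if_True)
qed

lemma w_out: assumes "\<not> (\<exists>n. blk \<theta> n x)" shows "w_fun \<sigma> \<theta> x = 0"
proof -
  have "\<not> (\<exists>n\<ge>2. a_seq n \<theta> \<le> x \<and> x < a_seq (Suc n) \<theta>)" using assms blk_ex by blast
  then show ?thesis unfolding w_fun_def by (simp only: if_False)
qed

definition Tn :: "real \<Rightarrow> nat \<Rightarrow> real \<Rightarrow> real" where
  "Tn \<theta> n x = max 0 (min (min (x - a_seq n \<theta>) (hh n \<theta>)) (a_seq n \<theta> + 3 * hh n \<theta> - x))"

definition Tg :: "real \<Rightarrow> real \<Rightarrow> real" where
  "Tg \<theta> x = (if \<exists>n. blk \<theta> n x then Tn \<theta> (THE n. blk \<theta> n x) x else 0)"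

lemma Tg_blk: assumes "blk \<theta> n x" shows "Tg \<theta> x = Tn \<theta> n x"
proof -
  have "(THE n. blk \<theta> n x) = n"
  proof (rule the_equality)
    show "blk \<theta> n x" by fact
  next
    fix m assume "blk \<theta> m x" then show "m = n" using blk_unique[OF assms] by simp
  qed
  moreover have "\<exists>n. blk \<theta> n x" using assms by blast
  ultimately show ?thesis unfolding Tg_def by (simp only: if_True)
qed

lemma Tg_out: assumes "\<not> (\<exists>n. blk \<theta> n x)" shows "Tg \<theta> x = 0"
  unfolding Tg_def using assms by (simp only: if_False)

lemma piece_T: assumes "0 < \<sigma>" "n \<ge> 1" "a_seq n \<theta> \<le> x"
  shows "w_piece \<sigma> \<theta> n x = Tn \<theta> n x powr \<sigma>"
proof -
  define a where "a = a_seq n \<theta>"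
  define h where "h = hh n \<theta>"
  have h: "h > 0" using hh_pos assms unfolding h_def by auto
  have hp: "h powr \<sigma> = real n powr (- \<theta> * \<sigma>)" unfolding h_def hh_def by (simp add: powr_powr)
  have W: "w_piece \<sigma> \<theta> n x = (if x < a + h then (x - a) powr \<sigma>
      else if x < a + 2 * h then h powr \<sigma>
      else if x < a + 3 * h then (a + 3 * h - x) powr \<sigma> else 0)"
    unfolding w_piece_def Let_def a_def h_def hh_def hp[unfolded h_def hh_def] by simp
  have T: "Tn \<theta> n x = max 0 (min (min (x - a) h) (a + 3 * h - x))" unfolding Tn_def a_def h_def ..
  have xa: "a \<le> x" using assms a_def by simp
  consider "x < a + h" | "a + h \<le> x" "x < a + 2 * h" | "a + 2 * h \<le> x" "x < a + 3 * h" | "a + 3 * h \<le> x" by linarith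
  then show ?thesis
  proof cases
    case 1
    then have "Tn \<theta> n x = x - a" unfolding T using h xa by (simp add: min_def max_def)
    then show ?thesis unfolding W using 1 by simp
  next
    case 2
    then have "Tn \<theta> n x = h" unfolding T using h xa by (simp add: min_def max_def)
    then show ?thesis unfolding W using 2 by simp
  next
    case 3
    then have "Tn \<theta> n x = a + 3 * h - x" unfolding T using h xa by (simp add: min_def max_def)
    then show ?thesis unfolding W using 3 h by simp
  next
    case 4
    then have "Tn \<theta> n x = 0" unfolding T using h xa by (simp add: min_def max_def)
    then show ?thesis unfolding W using 4 h assms by simp
  qed
qed

lemma w_T: assumes "0 < \<sigma>" shows "w_fun \<sigma> \<theta> x = Tg \<theta> x powr \<sigma>"
proof (cases "\<exists>n. blk \<theta> n x")
  case True
  then obtain n where n: "blk \<theta> n x" by auto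
  then show ?thesis using w_blk[OF n] Tg_blk[OF n] piece_T[OF assms, of n \<theta> x] by (auto simp: blk_def)
next
  case False then show ?thesis using w_out Tg_out by simp
qed

lemma min_lip: fixes a b c d e :: real
  assumes "\<bar>a - c\<bar> \<le> e" "\<bar>b - d\<bar> \<le> e" shows "\<bar>min a b - min c d\<bar> \<le> e"
  using assms unfolding min_def abs_le_iff by auto

lemma max_lip: fixes a b c d e :: real
  assumes "\<bar>a - c\<bar> \<le> e" "\<bar>b - d\<bar> \<le> e" shows "\<bar>max a b - max c d\<bar> \<le> e"
  using assms unfolding max_def abs_le_iff by auto

lemma Tn_props: assumes "n \<ge> 1"
  shows "0 \<le> Tn \<theta> n x" "Tn \<theta> n x \<le> hh n \<theta>" "a_seq n \<theta> \<le> x \<Longrightarrow> Tn \<theta> n x \<le> x - a_seq n \<theta>"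
    "x < a_seq (Suc n) \<theta> \<Longrightarrow> Tn \<theta> n x \<le> a_seq (Suc n) \<theta> - x"
    "\<bar>Tn \<theta> n x - Tn \<theta> n y\<bar> \<le> \<bar>x - y\<bar>"
proof -
  have h: "hh n \<theta> > 0" using hh_pos assms by auto
  have s: "a_seq (Suc n) \<theta> = a_seq n \<theta> + 4 * hh n \<theta>" using a_Suc1 assms by auto
  show "0 \<le> Tn \<theta> n x" unfolding Tn_def by simp
  show "Tn \<theta> n x \<le> hh n \<theta>" unfolding Tn_def using h by simp
  show "a_seq n \<theta> \<le> x \<Longrightarrow> Tn \<theta> n x \<le> x - a_seq n \<theta>" unfolding Tn_def by simp
  show "x < a_seq (Suc n) \<theta> \<Longrightarrow> Tn \<theta> n x \<le> a_seq (Suc n) \<theta> - x" unfolding Tn_def s using h by simp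
  define a where "a = a_seq n \<theta>"
  define c where "c = hh n \<theta>"
  have L: "\<bar>max 0 (min (min (x - a) c) (a + 3 * c - x)) - max 0 (min (min (y - a) c) (a + 3 * c - y))\<bar> \<le> \<bar>x - y\<bar>"
    by (intro max_lip min_lip) (auto simp: abs_minus_commute)
  then show "\<bar>Tn \<theta> n x - Tn \<theta> n y\<bar> \<le> \<bar>x - y\<bar>" unfolding Tn_def a_def c_def .
qed

lemma Tg_lip_aux: assumes "x \<le> y" shows "\<bar>Tg \<theta> x - Tg \<theta> y\<bar> \<le> y - x"
proof (cases "\<exists>n. blk \<theta> n x")
  case True
  then obtain n where n: "blk \<theta> n x" by auto
  have n1: "n \<ge> 1" using n by (simp add: blk_def)
  show ?thesis
  proof (cases "\<exists>m. blk \<theta> m y")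
    case True
    then obtain m where m: "blk \<theta> m y" by auto
    have m1: "m \<ge> 1" using m by (simp add: blk_def)
    show ?thesis
    proof (cases "n = m")
      case True then show ?thesis using Tn_props(5)[OF n1, where \<theta>=\<theta> and x=x and y=y] Tg_blk[OF n] Tg_blk[OF m] assms by simp
    next
      case False
      have "\<not> Suc m \<le> n" using a_mono[of "Suc m" n \<theta>] n m assms unfolding blk_def by linarith
      then have "Suc n \<le> m" using False by linarith
      then have "a_seq (Suc n) \<theta> \<le> a_seq m \<theta>" by (rule a_mono)
      then show ?thesis using Tn_props[OF n1, where \<theta>=\<theta> and x=x] Tn_props[OF m1, where \<theta>=\<theta> and x=y] Tg_blk[OF n] Tg_blk[OF m] n m
        unfolding blk_def abs_le_iff by linarith
    qed
  next
    case False
    then have "y \<ge> a_seq (Suc n) \<theta>" using n assms unfolding blk_def by force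
    then show ?thesis using Tn_props[OF n1, where \<theta>=\<theta> and x=x] Tg_blk[OF n] Tg_out[OF False] n
      unfolding blk_def abs_le_iff by linarith
  qed
next
  case False
  note xo = this
  show ?thesis
  proof (cases "\<exists>m. blk \<theta> m y")
    case True
    then obtain m where m: "blk \<theta> m y" by auto
    have m1: "m \<ge> 1" using m by (simp add: blk_def)
    have "x < a_seq m \<theta>" using xo m assms unfolding blk_def by force
    then show ?thesis using Tn_props[OF m1, where \<theta>=\<theta> and x=y] Tg_blk[OF m] Tg_out[OF xo] m
      unfolding blk_def abs_le_iff by linarith
  next
    case False then show ?thesis using Tg_out[OF xo] Tg_out[OF False] assms by simp
  qed
qed

lemma Tg_cont: "continuous_on UNIV (Tg \<theta>)"
proof -
  have "1-lipschitz_on UNIV (Tg \<theta>)"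
  proof (rule lipschitz_onI)
    fix x y :: real
    show "dist (Tg \<theta> x) (Tg \<theta> y) \<le> 1 * dist x y"
    proof (cases "x \<le> y")
      case True then show ?thesis using Tg_lip_aux[OF True, of \<theta>] by (simp add: dist_real_def)
    next
      case False then have yx: "y \<le> x" by simp
      show ?thesis using Tg_lip_aux[OF yx, of \<theta>] by (simp add: dist_real_def abs_minus_commute)
    qed
  qed simp
  then show ?thesis by (rule lipschitz_on_continuous_on)
qed

lemma Tg_bounds: assumes "1 < \<theta>" shows "0 \<le> Tg \<theta> x" "Tg \<theta> x \<le> 2 powr (- \<theta>)"
proof -
  have "0 \<le> Tg \<theta> x \<and> Tg \<theta> x \<le> 2 powr (- \<theta>)"
  proof (cases "\<exists>n. blk \<theta> n x")
    case True
    then obtain n where n: "blk \<theta> n x" by auto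
    have n1: "n \<ge> 1" and n2: "n \<ge> 2" using n by (auto simp: blk_def)
    have "hh n \<theta> \<le> 2 powr (- \<theta>)" unfolding hh_def using n2 assms
      by (intro powr_mono2') auto
    then show ?thesis using Tn_props(1,2)[OF n1, where \<theta>=\<theta> and x=x] Tg_blk[OF n] by simp
  next
    case False then show ?thesis using Tg_out by simp
  qed
  then show "0 \<le> Tg \<theta> x" "Tg \<theta> x \<le> 2 powr (- \<theta>)" by auto
qed

lemma blk_exists: assumes "1 < \<theta>" "4 \<le> x" "x < a_inf \<theta>" shows "\<exists>n. blk \<theta> n x"
proof -
  obtain k where k: "x < a_seq k \<theta>" using a_lim[OF assms(1,3)] by blast
  define N where "N = (LEAST k. x < a_seq k \<theta>)"
  have N: "x < a_seq N \<theta>" unfolding N_def using k by (rule LeastI)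
  have "N \<noteq> 0" using N assms(2) a0[of \<theta>] by (cases "N = 0") auto
  moreover have "N \<noteq> 1" using N assms(2) a1[of \<theta>] by (cases "N = 1") auto
  moreover have "N \<noteq> 2" using N assms(2) a2[of \<theta>] by (cases "N = 2") auto
  ultimately have N3: "N \<ge> 3" by linarith
  obtain n where n0: "N = Suc n" using N3 by (cases N) auto
  have n: "N = Suc n" "n \<ge> 2" using n0 N3 by auto
  have "\<not> x < a_seq n \<theta>" using not_less_Least[of n "\<lambda>k. x < a_seq k \<theta>"] n unfolding N_def by simp
  then show ?thesis using n N unfolding blk_def by auto
qed

lemma no_blk_low: assumes "x < 4" shows "\<not> blk \<theta> n x"
  using a_mono[of 2 n \<theta>] a2 assms unfolding blk_def by auto

lemma no_blk_high: assumes "1 < \<theta>" "a_inf \<theta> < x" shows "\<not> blk \<theta> n x"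
  using a_le_inf[OF assms(1), of "Suc n"] assms unfolding blk_def by auto

lemma local_smooth:
  assumes s: "0 < \<sigma>" and t: "1 < \<theta>" and x: "x \<notin> trans_pts \<theta>"
  shows "\<exists>U g g'. open U \<and> x \<in> U \<and> (\<forall>y\<in>U. w_fun \<sigma> \<theta> y = g y)
     \<and> (\<forall>y\<in>U. (g has_real_derivative g' y) (at y)) \<and> continuous_on U g'"
proof -
  have xi: "x \<noteq> a_inf \<theta>" using x unfolding trans_pts_def by auto
  consider "x < 4" | "a_inf \<theta> < x" | "4 \<le> x" "x < a_inf \<theta>" using xi by linarith
  then show ?thesis
  proof cases
    case 1
    have "\<forall>y\<in>{..<4}. w_fun \<sigma> \<theta> y = 0" using no_blk_low w_out by auto
    then show ?thesis using 1
      by (intro exI[of _ "{..<4}"] exI[of _ "\<lambda>_. 0"]) (auto intro!: derivative_eq_intros)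
  next
    case 2
    have "\<forall>y\<in>{a_inf \<theta><..}. w_fun \<sigma> \<theta> y = 0" using no_blk_high[OF t] w_out by auto
    then show ?thesis using 2
      by (intro exI[of _ "{a_inf \<theta><..}"] exI[of _ "\<lambda>_. 0"]) (auto intro!: derivative_eq_intros)
  next
    case 3
    then obtain n where n: "blk \<theta> n x" using blk_exists[OF t] by blast
    have n2: "n \<ge> 2" using n unfolding blk_def by simp
    define a where "a = a_seq n \<theta>"
    define h where "h = hh n \<theta>"
    have h: "h > 0" using hh_pos n2 unfolding h_def by auto
    have aS: "a_seq (Suc n) \<theta> = a + 4 * h" using a_Suc1[of n \<theta>] n2 unfolding a_def h_def by simp
    have a2le: "a_seq 2 \<theta> \<le> x" using 3 a2 by simp
    have ne: "x \<noteq> a + real k * h" if "k \<in> {0,1,2,3::nat}" for k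
      using x that n2 a2le 3 unfolding trans_pts_def a_def h_def hh_def a_inf_def by blast
    have ne0: "x \<noteq> a" and ne1: "x \<noteq> a + h" and ne2: "x \<noteq> a + 2 * h" and ne3: "x \<noteq> a + 3 * h"
      using ne[of 0] ne[of 1] ne[of 2] ne[of 3] by auto
    have xr: "a \<le> x" "x < a + 4 * h" using n aS unfolding blk_def a_def by auto
    have blkU: "blk \<theta> n y" if "a \<le> y" "y < a + 4 * h" for y
      using that n2 aS unfolding blk_def a_def by auto
    have W: "w_fun \<sigma> \<theta> y = (if y < a + h then (y - a) powr \<sigma>
      else if y < a + 2 * h then real n powr (- \<theta> * \<sigma>)
      else if y < a + 3 * h then (a + 3 * h - y) powr \<sigma> else 0)" if "a \<le> y" "y < a + 4 * h" for y
      unfolding w_blk[OF blkU[OF that]] w_piece_def Let_def a_def h_def hh_def ..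
    consider "a < x" "x < a + h" | "a + h < x" "x < a + 2 * h" | "a + 2 * h < x" "x < a + 3 * h"
      | "a + 3 * h < x" "x < a + 4 * h"
      using xr ne0 ne1 ne2 ne3 by linarith
    then show ?thesis
    proof cases
      case 1
      have "\<forall>y\<in>{a<..<a+h}. w_fun \<sigma> \<theta> y = (y - a) powr \<sigma>" using W h by auto
      moreover have "\<forall>y\<in>{a<..<a+h}. ((\<lambda>y. (y - a) powr \<sigma>) has_real_derivative \<sigma> * (y - a) powr (\<sigma> - 1)) (at y)"
        by (auto intro!: derivative_eq_intros)
      moreover have "continuous_on {a<..<a+h} (\<lambda>y. \<sigma> * (y - a) powr (\<sigma> - 1))"
        by (intro continuous_intros) auto
      ultimately show ?thesis using 1
        by (intro exI[of _ "{a<..<a+h}"] exI[of _ "\<lambda>y. (y - a) powr \<sigma>"] exI[of _ "\<lambda>y. \<sigma> * (y - a) powr (\<sigma> - 1)"]) auto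
    next
      case 2
      have "\<forall>y\<in>{a+h<..<a+2*h}. w_fun \<sigma> \<theta> y = real n powr (- \<theta> * \<sigma>)" using W h by auto
      then show ?thesis using 2
        by (intro exI[of _ "{a+h<..<a+2*h}"] exI[of _ "\<lambda>_. real n powr (- \<theta> * \<sigma>)"] exI[of _ "\<lambda>_. 0"])
          (auto intro!: derivative_eq_intros)
    next
      case 3
      have "\<forall>y\<in>{a+2*h<..<a+3*h}. w_fun \<sigma> \<theta> y = (a + 3 * h - y) powr \<sigma>" using W h by auto
      moreover have "\<forall>y\<in>{a+2*h<..<a+3*h}. ((\<lambda>y. (a + 3 * h - y) powr \<sigma>) has_real_derivative - (\<sigma> * (a + 3 * h - y) powr (\<sigma> - 1))) (at y)"
        by (auto intro!: derivative_eq_intros)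
      moreover have "continuous_on {a+2*h<..<a+3*h} (\<lambda>y. - (\<sigma> * (a + 3 * h - y) powr (\<sigma> - 1)))"
        by (intro continuous_intros) auto
      ultimately show ?thesis using 3
        by (intro exI[of _ "{a+2*h<..<a+3*h}"] exI[of _ "\<lambda>y. (a + 3 * h - y) powr \<sigma>"]
            exI[of _ "\<lambda>y. - (\<sigma> * (a + 3 * h - y) powr (\<sigma> - 1))"]) auto
    next
      case 4
      have "\<forall>y\<in>{a+3*h<..<a+4*h}. w_fun \<sigma> \<theta> y = 0" using W h by auto
      then show ?thesis using 4
        by (intro exI[of _ "{a+3*h<..<a+4*h}"] exI[of _ "\<lambda>_. 0"] exI[of _ "\<lambda>_. 0"])
          (auto intro!: derivative_eq_intros)
    qed
  qed
qed

lemma local_deriv: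
  assumes s: "0 < \<sigma>" and t: "1 < \<theta>" and x: "x \<notin> trans_pts \<theta>"
  shows "(w_fun \<sigma> \<theta> has_real_derivative deriv (w_fun \<sigma> \<theta>) x) (at x) \<and> isCont (deriv (w_fun \<sigma> \<theta>)) x"
proof -
  obtain U g g' where U: "open U" "x \<in> U" "\<forall>y\<in>U. w_fun \<sigma> \<theta> y = g y"
    "\<forall>y\<in>U. (g has_real_derivative g' y) (at y)" "continuous_on U g'"
    using local_smooth[OF s t x] by blast
  have D: "(w_fun \<sigma> \<theta> has_real_derivative g' y) (at y)" if "y \<in> U" for y
    using has_field_derivative_transform_within_open[of g "g' y" y U "w_fun \<sigma> \<theta>"] U that by auto
  have E: "deriv (w_fun \<sigma> \<theta>) y = g' y" if "y \<in> U" for y using D[OF that] by (rule DERIV_imp_deriv)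
  have "continuous_on U (deriv (w_fun \<sigma> \<theta>))" using U(5) E by (metis continuous_on_eq)
  then have "isCont (deriv (w_fun \<sigma> \<theta>)) x" using U(1,2) continuous_on_eq_continuous_at by blast
  then show ?thesis using D[OF U(2)] E[OF U(2)] by simp
qed

theorem lemma2p1:
  fixes \<sigma> \<theta> :: real
  assumes "\<sigma> > 0" and "1 < \<theta>"
  shows "continuous_on UNIV (w_fun \<sigma> \<theta>)
       \<and> compact (closure {\<xi>. w_fun \<sigma> \<theta> \<xi> \<noteq> 0})
       \<and> closure {\<xi>. w_fun \<sigma> \<theta> \<xi> \<noteq> 0} \<subseteq> {4 .. 4 * zeta_real \<theta>}
       \<and> countable (trans_pts \<theta>)
       \<and> w_fun \<sigma> \<theta> C1_differentiable_on (- trans_pts \<theta>)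
       \<and> (AE \<xi> in lborel. w_fun \<sigma> \<theta> differentiable (at \<xi>))
       \<and> (\<forall>\<gamma>>0. \<forall>\<xi>. w_fun (\<gamma> * \<sigma>) \<theta> \<xi> = (w_fun \<sigma> \<theta> \<xi>) powr (\<gamma> - 1) * w_fun \<sigma> \<theta> \<xi>)
       \<and> (\<forall>\<xi>. 0 \<le> w_fun \<sigma> \<theta> \<xi> \<and> w_fun \<sigma> \<theta> \<xi> \<le> 2 powr (- \<sigma> * \<theta>))"
proof -
  have wT: "w_fun \<sigma> \<theta> = (\<lambda>x. Tg \<theta> x powr \<sigma>)" using w_T[OF assms(1)] by blast
  have C: "continuous_on UNIV (w_fun \<sigma> \<theta>)" unfolding wT
    using Tg_bounds(1)[OF assms(2)] assms(1)
    by (intro continuous_on_powr' Tg_cont continuous_on_const) auto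
  have supp: "{\<xi>. w_fun \<sigma> \<theta> \<xi> \<noteq> 0} \<subseteq> {4 .. 4 * zeta_real \<theta>}"
  proof
    fix \<xi> assume "\<xi> \<in> {\<xi>. w_fun \<sigma> \<theta> \<xi> \<noteq> 0}"
    then have "\<exists>n. blk \<theta> n \<xi>" using w_out[of \<theta> \<xi> \<sigma>] by blast
    then obtain n where n: "blk \<theta> n \<xi>" by blast
    have "4 \<le> \<xi>" using n a_mono[of 2 n \<theta>] a2[of \<theta>] unfolding blk_def by auto
    moreover have "\<xi> \<le> 4 * zeta_real \<theta>" using n a_le_inf[OF assms(2), of "Suc n"] unfolding blk_def a_inf_def by auto
    ultimately show "\<xi> \<in> {4 .. 4 * zeta_real \<theta>}" by simp
  qed
  have cl: "closure {\<xi>. w_fun \<sigma> \<theta> \<xi> \<noteq> 0} \<subseteq> {4 .. 4 * zeta_real \<theta>}"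
    using supp by (intro closure_minimal) auto
  have cp: "compact (closure {\<xi>. w_fun \<sigma> \<theta> \<xi> \<noteq> 0})"
    using cl by (meson bounded_closed_interval bounded_subset closed_closure compact_eq_bounded_closed)
  have ct: "countable (trans_pts \<theta>)"
  proof -
    have "trans_pts \<theta> \<subseteq> insert (a_inf \<theta>) ((\<lambda>(n, k). a_seq n \<theta> + real k * real n powr (- \<theta>)) ` (UNIV :: (nat \<times> nat) set))"
    proof
      fix \<xi> assume "\<xi> \<in> trans_pts \<theta>"
      then consider "\<xi> = a_inf \<theta>" | n k where "\<xi> = a_seq n \<theta> + real k * real n powr (- \<theta>)"
        unfolding trans_pts_def by blast
      then show "\<xi> \<in> insert (a_inf \<theta>) ((\<lambda>(n, k). a_seq n \<theta> + real k * real n powr (- \<theta>)) ` (UNIV :: (nat \<times> nat) set))"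
      proof cases
        case 1 then show ?thesis by simp
      next
        case (2 n k) then show ?thesis by (intro insertI2 image_eqI[where x="(n,k)"]) auto
      qed
    qed
    moreover have "countable (insert (a_inf \<theta>) ((\<lambda>(n, k). a_seq n \<theta> + real k * real n powr (- \<theta>)) ` (UNIV :: (nat \<times> nat) set)))"
      by simp
    ultimately show ?thesis by (rule countable_subset)
  qed
  have LD: "\<And>x. x \<notin> trans_pts \<theta> \<Longrightarrow> (w_fun \<sigma> \<theta> has_real_derivative deriv (w_fun \<sigma> \<theta>) x) (at x) \<and> isCont (deriv (w_fun \<sigma> \<theta>)) x"
    using local_deriv[OF assms] by blast
  have C1: "w_fun \<sigma> \<theta> C1_differentiable_on (- trans_pts \<theta>)"
    unfolding C1_differentiable_on_def
  proof (intro exI conjI ballI)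
    fix x assume "x \<in> - trans_pts \<theta>"
    then show "(w_fun \<sigma> \<theta> has_vector_derivative deriv (w_fun \<sigma> \<theta>) x) (at x)"
      using LD has_real_derivative_iff_has_vector_derivative by auto
  next
    show "continuous_on (- trans_pts \<theta>) (deriv (w_fun \<sigma> \<theta>))"
      using LD by (intro continuous_at_imp_continuous_on) auto
  qed
  have AE: "AE \<xi> in lborel. w_fun \<sigma> \<theta> differentiable (at \<xi>)"
  proof -
    have "AE \<xi> in lborel. \<xi> \<notin> trans_pts \<theta>"
      by (rule AE_not_in) (rule countable_imp_null_set_lborel[OF ct])
    then show ?thesis
    proof (rule eventually_mono)
      fix x assume "x \<notin> trans_pts \<theta>"
      then show "w_fun \<sigma> \<theta> differentiable (at x)" using LD real_differentiable_def by blast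
    qed
  qed
  have pw: "\<forall>\<gamma>>0. \<forall>\<xi>. w_fun (\<gamma> * \<sigma>) \<theta> \<xi> = (w_fun \<sigma> \<theta> \<xi>) powr (\<gamma> - 1) * w_fun \<sigma> \<theta> \<xi>"
  proof (intro allI impI)
    fix \<gamma> \<xi> :: real assume g: "\<gamma> > 0"
    have gs: "\<gamma> * \<sigma> > 0" using g assms by simp
    define t where "t = Tg \<theta> \<xi>"
    have t0: "t \<ge> 0" using Tg_bounds(1)[OF assms(2)] t_def by simp
    have "t powr (\<gamma> * \<sigma>) = (t powr \<sigma>) powr (\<gamma> - 1) * t powr \<sigma>"
    proof (cases "t = 0")
      case True then show ?thesis by simp
    next
      case False
      then have "t > 0" using t0 by simp
      then show ?thesis by (simp add: powr_powr powr_add[symmetric] algebra_simps)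
    qed
    then show "w_fun (\<gamma> * \<sigma>) \<theta> \<xi> = (w_fun \<sigma> \<theta> \<xi>) powr (\<gamma> - 1) * w_fun \<sigma> \<theta> \<xi>"
      unfolding w_T[OF gs] w_T[OF assms(1)] t_def .
  qed
  have bd: "\<forall>\<xi>. 0 \<le> w_fun \<sigma> \<theta> \<xi> \<and> w_fun \<sigma> \<theta> \<xi> \<le> 2 powr (- \<sigma> * \<theta>)"
  proof
    fix \<xi>
    have "Tg \<theta> \<xi> powr \<sigma> \<le> (2 powr (- \<theta>)) powr \<sigma>"
      using Tg_bounds[OF assms(2), of \<xi>] assms(1) by (intro powr_mono2) auto
    also have "\<dots> = 2 powr (- \<sigma> * \<theta>)" by (simp add: powr_powr mult.commute)
    finally show "0 \<le> w_fun \<sigma> \<theta> \<xi> \<and> w_fun \<sigma> \<theta> \<xi> \<le> 2 powr (- \<sigma> * \<theta>)"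
      unfolding w_T[OF assms(1)] by simp
  qed
  show ?thesis using C cp cl ct C1 AE pw bd by blast
qed

end
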